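(* Let $A_1,A_2$ be algebras and $k:A_1\to A_2$ an algebra epimorphism (surjective unital algebra homomorphism). Then $\dim(\mathfrak{u}_{A_2})\le\dim(\mathfrak{u}_{A_1})$.
   Context: An "algebra" is a real finite-dimensional unital associative algebra with underlying vector space $\mathbb{R}^n$, standard basis, elements column vectors $s=(x_1,\dots,x_n)^T$, $\mathbf{d}s=(dx_1,\dots,dx_n)^T$. An uncurling metric of $A$ is a real symmetric $n\times n$ matrix $L$ with $d\big((s^{-1})^TL\,\mathbf{d}s\big)=0$ on an open ball centered at $\mathbf{1}_A$ consisting only of units; the anti-rotor $\mathfrak{u}_A$ is the real vector space of all uncurling metrics of $A$. *)

theory Defs
  imports "HOL-Analysis.Analysis"
begin

definition is_algebra :: "(real^'n \<Rightarrow> real^'n \<Rightarrow> real^'n) \<Rightarrow> real^'n \<Rightarrow> bool" where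
  "is_algebra mul one \<longleftrightarrow> bilinear mul \<and>
     (\<forall>a b c. mul (mul a b) c = mul a (mul b c)) \<and>
     (\<forall>a. mul one a = a \<and> mul a one = a)"

definition alg_units :: "(real^'n \<Rightarrow> real^'n \<Rightarrow> real^'n) \<Rightarrow> real^'n \<Rightarrow> (real^'n) set" where
  "alg_units mul one = {s. \<exists>t. mul s t = one \<and> mul t s = one}"

definition alg_inv :: "(real^'n \<Rightarrow> real^'n \<Rightarrow> real^'n) \<Rightarrow> real^'n \<Rightarrow> real^'n \<Rightarrow> real^'n" where
  "alg_inv mul one s = (THE t. mul s t = one \<and> mul t s = one)"

definition alg_hom :: "(real^'n \<Rightarrow> real^'n \<Rightarrow> real^'n) \<Rightarrow> real^'n \<Rightarrow>
    (real^'m \<Rightarrow> real^'m \<Rightarrow> real^'m) \<Rightarrow> real^'m \<Rightarrow> (real^'n \<Rightarrow> real^'m) \<Rightarrow> bool" where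
  "alg_hom mul1 one1 mul2 one2 k \<longleftrightarrow> linear k \<and>
     (\<forall>a b. k (mul1 a b) = mul2 (k a) (k b)) \<and> k one1 = one2"

text \<open>The 1-form (s^{-1})^T L ds has coefficient vector f(s) = s^{-1} v* L;
  it is closed at s iff f is differentiable at s and d f_j/d x_k = d f_k / d x_j.\<close>
definition uncurling_metric :: "(real^'n \<Rightarrow> real^'n \<Rightarrow> real^'n) \<Rightarrow> real^'n \<Rightarrow> real^'n^'n \<Rightarrow> bool" where
  "uncurling_metric mul one L \<longleftrightarrow> transpose L = L \<and>
     (\<exists>r>0. ball one r \<subseteq> alg_units mul one \<and>
        (\<forall>s\<in>ball one r. \<exists>f'.
           ((\<lambda>x. alg_inv mul one x v* L) has_derivative f') (at s) \<and>
           (\<forall>j k. f' (axis k 1) $ j = f' (axis j 1) $ k)))"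

definition anti_rotor :: "(real^'n \<Rightarrow> real^'n \<Rightarrow> real^'n) \<Rightarrow> real^'n \<Rightarrow> (real^'n^'n) set" where
  "anti_rotor mul one = {L. uncurling_metric mul one L}"

end

theory Submission
  imports Defs
begin

lemma units_ball:
  assumes A: "is_algebra mul one"
  shows "\<exists>r>0. ball one r \<subseteq> alg_units mul one"
proof -
  have bb: "bounded_bilinear mul" using A unfolding is_algebra_def
    by (simp add: bilinear_conv_bounded_bilinear)
  have assoc: "\<And>a b c. mul (mul a b) c = mul a (mul b c)"
    and unit: "\<And>a. mul one a = a" "\<And>a. mul a one = a"
    using A unfolding is_algebra_def by auto
  obtain K where K: "K > 0" "\<And>a b. norm (mul a b) \<le> norm a * norm b * K"
    using bounded_bilinear.pos_bounded[OF bb] by blast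
  show ?thesis
  proof (intro exI conjI subsetI)
    show "1 / K > 0" using K by simp
    fix s assume "s \<in> ball one (1/K)"
    hence ns: "norm (s - one) * K < 1" using K
      by (simp add: dist_norm norm_minus_commute field_simps)
    have lin: "linear (mul s)"
      using bounded_bilinear.bounded_linear_right[OF bb] bounded_linear.linear by blast
    have inj: "inj (mul s)"
    proof (rule linear_inj_on_iff_eq_0[THEN iffD2, OF lin])
      show "\<forall>x\<in>UNIV. mul s x = 0 \<longrightarrow> x = 0"
      proof (intro ballI impI)
        fix x assume h: "mul s x = 0"
        have "mul (s - one) x = mul s x - mul one x"
          by (simp add: bounded_bilinear.diff_left[OF bb])
        hence "mul (s - one) x = - x" using h unit by simp
        hence "norm x \<le> norm (s - one) * norm x * K" using K(2)[of "s - one" x] by simp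
        hence "norm x * 1 \<le> norm x * (norm (s - one) * K)" by (simp add: algebra_simps)
        with ns have "norm x \<le> 0"
          by (smt (verit) mult_left_mono norm_ge_zero mult_le_cancel_left1)
        thus "x = 0" by simp
      qed
    qed (rule subspace_UNIV)
    have "surj (mul s)"
      using lin inj by (simp add: linear_injective_imp_surjective)
    then obtain t where t: "mul s t = one" by (metis surjD)
    have "mul s (mul t s) = mul s one" using t assoc unit by (metis)
    hence "mul t s = one" using inj by (simp add: inj_eq)
    thus "s \<in> alg_units mul one" using t unfolding alg_units_def by blast
  qed
qed

lemma inv_eq:
  assumes A: "is_algebra mul one" and "mul s t = one" and "mul t s = one"
  shows "alg_inv mul one s = t"
  unfolding alg_inv_def
proof (rule the_equality)
  show "mul s t = one \<and> mul t s = one" using assms by simp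
  fix t' assume h: "mul s t' = one \<and> mul t' s = one"
  have assoc: "\<And>a b c. mul (mul a b) c = mul a (mul b c)"
    and unit: "\<And>a. mul one a = a" "\<And>a. mul a one = a"
    using A unfolding is_algebra_def by auto
  have "t' = mul t' (mul s t)" using assms unit by simp
  also have "\<dots> = mul (mul t' s) t" using assoc by simp
  also have "\<dots> = t" using h unit by simp
  finally show "t' = t" .
qed

lemma hom_inv:
  assumes A1: "is_algebra mul1 one1" and A2: "is_algebra mul2 one2"
    and h: "alg_hom mul1 one1 mul2 one2 k" and s: "s \<in> alg_units mul1 one1"
  shows "k (alg_inv mul1 one1 s) = alg_inv mul2 one2 (k s)"
proof -
  obtain t where t: "mul1 s t = one1" "mul1 t s = one1" using s unfolding alg_units_def by blast
  have "alg_inv mul1 one1 s = t" using inv_eq[OF A1 t] .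
  moreover have "alg_inv mul2 one2 (k s) = k t"
    using h t unfolding alg_hom_def by (intro inv_eq[OF A2]) metis+
  ultimately show ?thesis by simp
qed

lemma sym_deriv:
  fixes F :: "real^'m \<Rightarrow> real^'m"
  assumes lin: "linear F" and sym: "\<forall>j k. F (axis k 1) $ j = F (axis j 1) $ k"
  shows "F v \<bullet> u = F u \<bullet> v"
proof -
  define M where "M = matrix F"
  have FM: "\<And>x. F x = M *v x" unfolding M_def using lin by (simp add: matrix_vector_mul(2))
  have "transpose M = M" unfolding M_def matrix_def transpose_def using sym by (simp add: vec_eq_iff)
  have "(M *v v) \<bullet> u = v \<bullet> (transpose M *v u)" by (metis dot_lmul_matrix vector_transpose_matrix)
  also have "\<dots> = (M *v u) \<bullet> v" using \<open>transpose M = M\<close> by (simp add: inner_commute)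
  finally show ?thesis using FM by simp
qed


lemma pullback:
  fixes mul1 :: "real^'n \<Rightarrow> real^'n \<Rightarrow> real^'n" and one1 :: "real^'n"
    and mul2 :: "real^'m \<Rightarrow> real^'m \<Rightarrow> real^'m" and one2 :: "real^'m"
    and k :: "real^'n \<Rightarrow> real^'m"
  assumes A1: "is_algebra mul1 one1" and A2: "is_algebra mul2 one2"
    and h: "alg_hom mul1 one1 mul2 one2 k"
    and L: "uncurling_metric mul2 one2 L"
  shows "uncurling_metric mul1 one1 (transpose (matrix k) ** L ** matrix k)"
proof -
  define K where "K = matrix k"
  have link: "linear k" using h unfolding alg_hom_def by simp
  have kK: "\<And>x. k x = K *v x" unfolding K_def using link by (simp add: matrix_vector_mul(2))
  have Ls: "transpose L = L" using L unfolding uncurling_metric_def by simp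
  obtain r2 where r2: "r2 > 0" "ball one2 r2 \<subseteq> alg_units mul2 one2"
    "\<forall>s\<in>ball one2 r2. \<exists>f'. ((\<lambda>x. alg_inv mul2 one2 x v* L) has_derivative f') (at s) \<and>
           (\<forall>j k. f' (axis k 1) $ j = f' (axis j 1) $ k)"
    using L unfolding uncurling_metric_def by blast
  obtain r0 where r0: "r0 > 0" "ball one1 r0 \<subseteq> alg_units mul1 one1"
    using units_ball[OF A1] by blast
  have "isCont k one1" using link by (simp add: linear_continuous_at linear_conv_bounded_linear)
  then obtain d where d: "d > 0" "k ` ball one1 d \<subseteq> ball (k one1) r2"
    using r2(1) unfolding continuous_at_ball by blast
  have k1: "k one1 = one2" using h unfolding alg_hom_def by simp
  define r where "r = min r0 d"
  have blin: "bounded_linear (\<lambda>y::real^'m. y v* K)"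
    by (simp add: linear_conv_bounded_linear[symmetric] flip: transpose_matrix_vector)
  show ?thesis
    unfolding uncurling_metric_def
  proof (intro conjI exI[of _ r] ballI)
    show "transpose (transpose (matrix k) ** L ** matrix k) = transpose (matrix k) ** L ** matrix k"
      using Ls by (simp add: matrix_transpose_mul matrix_mul_assoc)
    show "r > 0" using r0 d by (simp add: r_def)
    show "ball one1 r \<subseteq> alg_units mul1 one1" using r0 by (auto simp: r_def)
    fix s assume s: "s \<in> ball one1 r"
    have "s \<in> ball one1 d" using s by (auto simp: r_def)
    hence "k s \<in> k ` ball one1 d" by (rule imageI)
    hence "k s \<in> ball (k one1) r2" using d(2) by (rule rev_subsetD)
    hence "k s \<in> ball one2 r2" using k1 by simp
    then obtain f' where f': "((\<lambda>x. alg_inv mul2 one2 x v* L) has_derivative f') (at (k s))"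
      "\<forall>j k. f' (axis k 1) $ j = f' (axis j 1) $ k"
      using r2(3) by blast
    have linf: "linear f'" using f'(1) has_derivative_linear by blast
    have dk: "(k has_derivative k) (at s)"
      using link by (simp add: bounded_linear_imp_has_derivative linear_conv_bounded_linear)
    have d1: "((\<lambda>x. alg_inv mul2 one2 (k x) v* L) has_derivative (\<lambda>h. f' (k h))) (at s)"
      using diff_chain_at[OF dk f'(1)] by (simp add: o_def)
    have d2: "((\<lambda>x. (alg_inv mul2 one2 (k x) v* L) v* K) has_derivative (\<lambda>h. f' (k h) v* K)) (at s)"
      using diff_chain_at[OF d1 bounded_linear_imp_has_derivative[OF blin]] by (simp add: o_def)
    have eq: "(alg_inv mul2 one2 (k x) v* L) v* K = alg_inv mul1 one1 x v* (transpose (matrix k) ** L ** matrix k)"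
      if "x \<in> ball one1 r" for x
    proof -
      have "x \<in> alg_units mul1 one1" using that r0 by (auto simp: r_def)
      hence "alg_inv mul2 one2 (k x) = K *v alg_inv mul1 one1 x"
        using hom_inv[OF A1 A2 h] kK by simp
      have "alg_inv mul1 one1 x v* (transpose K ** L ** K) = ((alg_inv mul1 one1 x v* transpose K) v* L) v* K"
        by (simp only: vector_matrix_mul_assoc)
      also have "\<dots> = (alg_inv mul2 one2 (k x) v* L) v* K"
        using \<open>alg_inv mul2 one2 (k x) = K *v alg_inv mul1 one1 x\<close> by (simp only: vector_transpose_matrix)
      finally show ?thesis unfolding K_def by simp
    qed
    have "((\<lambda>x. alg_inv mul1 one1 x v* (transpose (matrix k) ** L ** matrix k)) has_derivative (\<lambda>h. f' (k h) v* K)) (at s)"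
      by (rule has_derivative_transform_within_open[OF d2 open_ball s]) (rule eq)
    moreover have "\<forall>j ka. (f' (k (axis ka 1)) v* K) $ j = (f' (k (axis j 1)) v* K) $ ka"
    proof (intro allI)
      fix j ka
      have e: "\<And>w i. (w v* K) $ i = w \<bullet> k (axis i 1)"
        by (metis cart_eq_inner_axis dot_lmul_matrix kK)
      show "(f' (k (axis ka 1)) v* K) $ j = (f' (k (axis j 1)) v* K) $ ka"
        unfolding e by (rule sym_deriv[OF linf f'(2)])
    qed
    ultimately show "\<exists>f'. ((\<lambda>x. alg_inv mul1 one1 x v* (transpose (matrix k) ** L ** matrix k)) has_derivative f') (at s) \<and>
           (\<forall>j ka. f' (axis ka 1) $ j = f' (axis j 1) $ ka)" by blast
  qed
qed


lemma lin_T: "linear (\<lambda>L::real^'m^'m. (A::real^'m^'n) ** L ** B)"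
  by (rule linearI) (simp_all add: matrix_matrix_mult_def vec_eq_iff sum.distrib algebra_simps sum_distrib_left)

theorem corollary6p2:
  fixes mul1 :: "real^'n \<Rightarrow> real^'n \<Rightarrow> real^'n" and one1 :: "real^'n"
    and mul2 :: "real^'m \<Rightarrow> real^'m \<Rightarrow> real^'m" and one2 :: "real^'m"
    and k :: "real^'n \<Rightarrow> real^'m"
  assumes "is_algebra mul1 one1" and "is_algebra mul2 one2"
    and "alg_hom mul1 one1 mul2 one2 k" and "surj k"
  shows "dim (anti_rotor mul2 one2) \<le> dim (anti_rotor mul1 one1)"
proof -
  define K where "K = matrix k"
  define T where "T = (\<lambda>L::real^'m^'m. transpose K ** L ** K)"
  have link: "linear k" using assms(3) unfolding alg_hom_def by simp
  have kK: "\<And>x. k x = K *v x" unfolding K_def using link by (simp add: matrix_vector_mul(2))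
  have linT: "linear T" unfolding T_def by (rule lin_T)
  have injT: "inj T"
    unfolding linear_injective_0[OF linT]
  proof (intro allI impI)
    fix M assume M: "T M = 0"
    have "u \<bullet> (M *v v) = 0" for u v
    proof -
      obtain x where x: "u = k x" using assms(4) by (metis surjD)
      obtain y where y: "v = k y" using assms(4) by (metis surjD)
      have "u \<bullet> (M *v v) = (K *v x) \<bullet> (M *v (K *v y))" using x y kK by simp
      also have "\<dots> = x \<bullet> (transpose K *v (M *v (K *v y)))"
        by (metis dot_lmul_matrix vector_transpose_matrix)
      also have "\<dots> = x \<bullet> (T M *v y)" unfolding T_def by (simp add: matrix_vector_mul_assoc matrix_mul_assoc)
      finally show ?thesis using M by simp
    qed
    hence "\<And>v. M *v v = 0" by (metis inner_eq_zero_iff)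
    thus "M = 0" by (simp add: matrix_eq)
  qed
  have sub: "T ` anti_rotor mul2 one2 \<subseteq> anti_rotor mul1 one1"
    unfolding anti_rotor_def T_def K_def using pullback[OF assms(1,2,3)] by blast
  have "dim (anti_rotor mul2 one2) = dim (T ` anti_rotor mul2 one2)"
    using dim_image_eq[OF linT] injT by (metis inj_on_subset subset_UNIV)
  also have "\<dots> \<le> dim (anti_rotor mul1 one1)" using sub by (rule dim_subset)
  finally show ?thesis .
qed

end
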